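(* Fix $m\ge 2$, $C>0$ and $K\in[0,\infty)$. If $G=\langle\mathcal{S}\mid\mathcal{R}\rangle$ is a random $m$-generator, $n=Cl^K$ relator group, then asymptotically almost surely this presentation is $C'(\lambda)$ for $\lambda=\dfrac{6(K+2)\log l}{l\log(2m-1)}$.
   Context: Random $m$-generator, $n=Cl^K$ relator group: each of the $n$ relators is chosen independently and uniformly from the cyclically reduced words of length at most $l$ in $m$ generators and their inverses ($n$ rounded to an integer); "asymptotically almost surely" means with probability tending to $1$ as $l\to\infty$. $C'(\lambda)$: distinct cyclic conjugates of relators and their inverses share common initial subwords of length $<\lambda$ times the shorter length. *)

theory Defs
  imports Complex_Main "HOL-Library.Sublist"
begin

text \<open>Letters over generators 0..<m: (i, False) is the generator s_i, (i, True) its inverse.\<close>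
type_synonym letter = "nat \<times> bool"

definition inv_letter :: "letter \<Rightarrow> letter" where
  "inv_letter x = (fst x, \<not> snd x)"

definition inv_word :: "letter list \<Rightarrow> letter list" where
  "inv_word w = rev (map inv_letter w)"

definition reduced_word :: "letter list \<Rightarrow> bool" where
  "reduced_word w \<longleftrightarrow> (\<forall>i. Suc i < length w \<longrightarrow> w ! Suc i \<noteq> inv_letter (w ! i))"

definition cyc_reduced :: "letter list \<Rightarrow> bool" where
  "cyc_reduced w \<longleftrightarrow> reduced_word w \<and> (w \<noteq> [] \<longrightarrow> last w \<noteq> inv_letter (hd w))"

definition cr_words :: "nat \<Rightarrow> nat \<Rightarrow> letter list set" where
  "cr_words m l = {w. length w \<le> l \<and> set w \<subseteq> {0..<m} \<times> UNIV \<and> cyc_reduced w}"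

definition cyclic_conjugates :: "letter list \<Rightarrow> letter list set" where
  "cyclic_conjugates w = {rotate k w | k. True}"

definition symmetrized :: "letter list set \<Rightarrow> letter list set" where
  "symmetrized R = (\<Union>r\<in>R. cyclic_conjugates r \<union> cyclic_conjugates (inv_word r))"

definition small_cancellation :: "real \<Rightarrow> letter list set \<Rightarrow> bool" where
  "small_cancellation lam R \<longleftrightarrow>
     (\<forall>u\<in>symmetrized R. \<forall>v\<in>symmetrized R. u \<noteq> v \<longrightarrow>
        (\<forall>p. p \<noteq> [] \<and> prefix p u \<and> prefix p v \<longrightarrow>
             real (length p) < lam * real (min (length u) (length v))))"

definition num_relators :: "real \<Rightarrow> real \<Rightarrow> nat \<Rightarrow> nat" where
  "num_relators C K l = nat (round (C * real l powr K))"

text \<open>Probability that a tuple of n relators chosen independently and uniformly from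
  cr_words m l satisfies P (uniform measure on the n-fold product = counting).\<close>
definition rel_prob :: "nat \<Rightarrow> nat \<Rightarrow> nat \<Rightarrow> (letter list list \<Rightarrow> bool) \<Rightarrow> real" where
  "rel_prob m n l P =
     real (card {rs. length rs = n \<and> set rs \<subseteq> cr_words m l \<and> P rs})
   / real (card {rs. length rs = n \<and> set rs \<subseteq> cr_words m l})"

end

theory Submission
  imports Defs
begin

definition Alph :: "nat \<Rightarrow> letter set" where "Alph m = {0..<m} \<times> UNIV"
definition Rw :: "nat \<Rightarrow> nat \<Rightarrow> letter list set" where
  "Rw m k = {w. length w = k \<and> set w \<subseteq> Alph m \<and> reduced_word w}"
definition RL :: "nat \<Rightarrow> nat \<Rightarrow> letter list set" where
  "RL m k = {w. length w \<le> k \<and> set w \<subseteq> Alph m \<and> reduced_word w}"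

lemma inv_inv[simp]: "inv_letter (inv_letter x) = x"
  by (simp add: inv_letter_def)
lemma inv_neq[simp]: "inv_letter x \<noteq> x" "x \<noteq> inv_letter x"
  by (auto simp: inv_letter_def prod_eq_iff)
lemma inv_eq_iff: "inv_letter x = inv_letter y \<longleftrightarrow> x = y"
  by (metis inv_inv)
lemma inv_Alph[simp]: "inv_letter x \<in> Alph m \<longleftrightarrow> x \<in> Alph m"
  by (cases x) (auto simp: inv_letter_def Alph_def)
lemma finite_Alph[simp]: "finite (Alph m)" by (simp add: Alph_def)
lemma card_Alph: "card (Alph m) = 2*m" by (simp add: Alph_def card_cartesian_product)

lemma reduced_Nil[simp]: "reduced_word []" by (simp add: reduced_word_def)
lemma reduced_Cons: "reduced_word (x # w) \<longleftrightarrow> reduced_word w \<and> (w \<noteq> [] \<longrightarrow> hd w \<noteq> inv_letter x)"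
proof
  assume r: "reduced_word (x # w)"
  have "reduced_word w" unfolding reduced_word_def
  proof (intro allI impI)
    fix i assume "Suc i < length w"
    thus "w ! Suc i \<noteq> inv_letter (w ! i)" using r[unfolded reduced_word_def, rule_format, of "Suc i"] by simp
  qed
  moreover have "w \<noteq> [] \<longrightarrow> hd w \<noteq> inv_letter x"
    using r[unfolded reduced_word_def, rule_format, of 0] by (cases w) auto
  ultimately show "reduced_word w \<and> (w \<noteq> [] \<longrightarrow> hd w \<noteq> inv_letter x)" by blast
next
  assume r: "reduced_word w \<and> (w \<noteq> [] \<longrightarrow> hd w \<noteq> inv_letter x)"
  show "reduced_word (x # w)" unfolding reduced_word_def
  proof (intro allI impI)
    fix i assume i: "Suc i < length (x # w)"
    show "(x # w) ! Suc i \<noteq> inv_letter ((x # w) ! i)"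
    proof (cases i)
      case 0 thus ?thesis using r i by (cases w) auto
    next
      case (Suc j) thus ?thesis using r i unfolding reduced_word_def by auto
    qed
  qed
qed

lemma reduced_take: "reduced_word w \<Longrightarrow> reduced_word (take k w)"
  by (auto simp: reduced_word_def)
lemma reduced_drop: "reduced_word w \<Longrightarrow> reduced_word (drop k w)"
  by (auto simp: reduced_word_def)

lemma finite_Rw[simp]: "finite (Rw m k)"
proof -
  have "Rw m k \<subseteq> {w. set w \<subseteq> Alph m \<and> length w = k}" by (auto simp: Rw_def)
  thus ?thesis using finite_lists_length_eq[OF finite_Alph] finite_subset by blast
qed
lemma finite_RL[simp]: "finite (RL m k)"
proof -
  have "RL m k \<subseteq> {w. set w \<subseteq> Alph m \<and> length w \<le> k}" by (auto simp: RL_def)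
  thus ?thesis using finite_lists_length_le[OF finite_Alph] finite_subset by blast
qed


lemma Rw_Suc: assumes "k \<ge> 1"
  shows "Rw m (Suc k) = (\<lambda>(w,x). x # w) ` (SIGMA w:Rw m k. Alph m - {inv_letter (hd w)})"
proof (intro equalityI subsetI)
  fix v assume "v \<in> Rw m (Suc k)"
  then obtain x w where v: "v = x # w" and "length w = k" "set w \<subseteq> Alph m" "x \<in> Alph m" "reduced_word w"
     "hd w \<noteq> inv_letter x"
    using assms by (cases v) (auto simp: Rw_def reduced_Cons)
  moreover have "x \<noteq> inv_letter (hd w)" using \<open>hd w \<noteq> inv_letter x\<close> by auto
  ultimately show "v \<in> (\<lambda>(w,x). x # w) ` (SIGMA w:Rw m k. Alph m - {inv_letter (hd w)})"
    by (force simp: Rw_def)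
next
  fix v assume "v \<in> (\<lambda>(w,x). x # w) ` (SIGMA w:Rw m k. Alph m - {inv_letter (hd w)})"
  then obtain w x where "v = x # w" "w \<in> Rw m k" "x \<in> Alph m" "x \<noteq> inv_letter (hd w)" by auto
  thus "v \<in> Rw m (Suc k)" using assms by (auto simp: Rw_def reduced_Cons)
qed

lemma card_Rw_Suc: assumes "k \<ge> 1" shows "card (Rw m (Suc k)) = (2*m - 1) * card (Rw m k)"
proof -
  have inj: "inj_on (\<lambda>(w,x). x # w) (SIGMA w:Rw m k. Alph m - {inv_letter (hd w)})"
    by (auto simp: inj_on_def)
  have "card (Rw m (Suc k)) = card (SIGMA w:Rw m k. Alph m - {inv_letter (hd w)})"
    using Rw_Suc[OF assms] card_image[OF inj] by simp
  also have "\<dots> = (\<Sum>w\<in>Rw m k. card (Alph m - {inv_letter (hd w)}))"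
    by (rule card_SigmaI) auto
  also have "\<dots> = (\<Sum>w\<in>Rw m k. 2*m - 1)"
  proof (rule sum.cong)
    fix w assume "w \<in> Rw m k"
    hence "hd w \<in> Alph m" using assms by (cases w) (auto simp: Rw_def)
    thus "card (Alph m - {inv_letter (hd w)}) = 2*m - 1" by (simp add: card_Alph)
  qed simp
  finally show ?thesis by simp
qed

lemma Rw_1: "Rw m 1 = (\<lambda>x. [x]) ` Alph m"
  by (auto simp: Rw_def reduced_word_def length_Suc_conv)

lemma card_Rw: "k \<ge> 1 \<Longrightarrow> card (Rw m k) = 2*m * (2*m - 1)^(k - 1)"
proof (induction k rule: dec_induct)
  case base
  have "card (Rw m 1) = card (Alph m)" unfolding Rw_1 by (rule card_image) (auto simp: inj_on_def)
  thus ?case by (simp add: card_Alph)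
next
  case (step k)
  thus ?case using card_Rw_Suc[of k m] by (cases k) auto
qed

lemma card_Rw_le: assumes "m \<ge> 1" shows "real (card (Rw m k)) \<le> 2 * real (2*m-1)^k"
proof (cases "k = 0")
  case True
  have "Rw m 0 = {[]}" by (auto simp: Rw_def)
  thus ?thesis using True by simp
next
  case False
  hence "real (card (Rw m k)) = real (2*m) * real (2*m-1)^(k-1)" by (simp add: card_Rw)
  also have "\<dots> \<le> 2 * real (2*m-1) * real (2*m-1)^(k-1)"
    using assms by (intro mult_right_mono) auto
  also have "\<dots> = 2 * real (2*m-1)^k" using False
    by (metis (no_types, lifting) Suc_pred' bot_nat_0.not_eq_extremum mult.assoc power_Suc)
  finally show ?thesis .
qed

lemma geom_le: assumes "(q::real) \<ge> 2" shows "(\<Sum>k\<le>L. q^k) \<le> 2 * q^L"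
proof (induction L)
  case 0 thus ?case by simp
next
  case (Suc L)
  have "(\<Sum>k\<le>Suc L. q^k) \<le> 2*q^L + q^Suc L" using Suc by simp
  also have "\<dots> \<le> 2 * q^Suc L" using assms by simp
  finally show ?case .
qed

lemma card_RL_le: assumes "m \<ge> 2" shows "real (card (RL m L)) \<le> 4 * real (2*m-1)^L"
proof -
  have "RL m L = (\<Union>k\<in>{..L}. Rw m k)" by (auto simp: RL_def Rw_def)
  hence "card (RL m L) \<le> (\<Sum>k\<le>L. card (Rw m k))" using card_UN_le[of "{..L}" "Rw m"] by simp
  hence "real (card (RL m L)) \<le> (\<Sum>k\<le>L. real (card (Rw m k)))" by (metis of_nat_le_iff of_nat_sum)
  also have "\<dots> \<le> (\<Sum>k\<le>L. 2 * real (2*m-1)^k)" using assms by (intro sum_mono card_Rw_le) auto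
  also have "\<dots> = 2 * (\<Sum>k\<le>L. real (2*m-1)^k)" by (simp add: sum_distrib_left)
  also have "\<dots> \<le> 2 * (2 * real (2*m-1)^L)" using assms by (intro mult_left_mono geom_le) auto
  finally show ?thesis by simp
qed

definition CR :: "nat \<Rightarrow> nat \<Rightarrow> letter list set" where
  "CR m k = {w. length w = k \<and> set w \<subseteq> Alph m \<and> cyc_reduced w}"

definition cw :: "letter list \<Rightarrow> int \<Rightarrow> letter" where
  "cw w i = w ! nat (i mod int (length w))"

lemma rotate_inj: "rotate n xs = rotate n ys \<Longrightarrow> xs = ys"
proof (induction n)
  case 0 thus ?case by simp
next
  case (Suc n)
  have "rotate n xs = rotate n ys" using Suc.prems injD[OF inj_rotate1] by simp
  thus ?case using Suc.IH by simp
qed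

lemma cyc_char: "cyc_reduced w \<longleftrightarrow> (\<forall>i<length w. w ! (Suc i mod length w) \<noteq> inv_letter (w ! i))"
proof (cases "w = []")
  case True thus ?thesis by (simp add: cyc_reduced_def reduced_word_def)
next
  case False
  define n where "n = length w"
  have n: "n > 0" using False by (simp add: n_def)
  have lasteq: "last w = w ! (n - 1)" using False by (simp add: last_conv_nth n_def)
  have hdeq: "hd w = w ! 0" using False by (simp add: hd_conv_nth)
  show ?thesis
  proof
    assume c: "cyc_reduced w"
    show "\<forall>i<length w. w ! (Suc i mod length w) \<noteq> inv_letter (w ! i)"
    proof (intro allI impI)
      fix i assume i: "i < length w"
      show "w ! (Suc i mod length w) \<noteq> inv_letter (w ! i)"
      proof (cases "Suc i < n")
        case True thus ?thesis using c by (simp add: cyc_reduced_def reduced_word_def n_def)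
      next
        case False
        hence si: "Suc i = n" using i n_def by simp
        hence "i = n - 1" "Suc i mod n = 0" by auto
        moreover have "last w \<noteq> inv_letter (hd w)" using c False by (simp add: cyc_reduced_def \<open>w \<noteq> []\<close>)
        ultimately show ?thesis using lasteq hdeq n_def by (metis inv_inv)
      qed
    qed
  next
    assume c: "\<forall>i<length w. w ! (Suc i mod length w) \<noteq> inv_letter (w ! i)"
    have "reduced_word w" unfolding reduced_word_def
    proof (intro allI impI)
      fix i assume "Suc i < length w" thus "w ! Suc i \<noteq> inv_letter (w ! i)" using c[rule_format, of i] by simp
    qed
    moreover have "w ! 0 \<noteq> inv_letter (w ! (n - 1))"
      using c[rule_format, of "n-1"] n n_def by simp
    hence "last w \<noteq> inv_letter (hd w)" using lasteq hdeq by (metis inv_inv)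
    ultimately show "cyc_reduced w" by (simp add: cyc_reduced_def)
  qed
qed

lemma cyc_rotate: assumes "cyc_reduced w" shows "cyc_reduced (rotate r w)"
proof (cases "w = []")
  case True thus ?thesis using assms by simp
next
  case False
  define n where "n = length w"
  have n: "n > 0" using False by (simp add: n_def)
  show ?thesis unfolding cyc_char
  proof (intro allI impI)
    fix i assume i: "i < length (rotate r w)"
    hence i': "i < n" by (simp add: n_def)
    define j where "j = (r + i) mod n"
    have j: "j < n" using n by (simp add: j_def)
    have e1: "rotate r w ! i = w ! j" using i' by (simp add: nth_rotate n_def j_def)
    have e2: "rotate r w ! (Suc i mod length (rotate r w)) = w ! (Suc j mod n)"
      using n by (simp add: nth_rotate n_def j_def mod_add_right_eq mod_Suc_eq)
    show "rotate r w ! (Suc i mod length (rotate r w)) \<noteq> inv_letter (rotate r w ! i)"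
      using e1 e2 assms j unfolding cyc_char n_def by simp
  qed
qed

lemma nth_inv_word: "i < length w \<Longrightarrow> inv_word w ! i = inv_letter (w ! (length w - 1 - i))"
  by (simp add: inv_word_def rev_nth)

lemma length_inv_word[simp]: "length (inv_word w) = length w" by (simp add: inv_word_def)
lemma inv_word_inv_word[simp]: "inv_word (inv_word w) = w"
  by (simp add: inv_word_def rev_map comp_def)
lemma set_inv_word: "set (inv_word w) = inv_letter ` set w" by (simp add: inv_word_def)

lemma cyc_inv_word: assumes "cyc_reduced w" shows "cyc_reduced (inv_word w)"
proof (cases "w = []")
  case True thus ?thesis using assms by (simp add: inv_word_def)
next
  case False
  define n where "n = length w"
  have n: "n > 0" using False by (simp add: n_def)
  show ?thesis unfolding cyc_char
  proof (intro allI impI)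
    fix j assume "j < length (inv_word w)"
    hence j: "j < n" by (simp add: n_def)
    define i where "i = n - 1 - Suc j mod n"
    have i: "i < n" using n by (simp add: i_def)
    have si: "Suc i mod n = n - 1 - j"
    proof (cases "Suc j < n")
      case True thus ?thesis by (simp add: i_def)
    next
      case False hence "j = n - 1" using j by simp
      thus ?thesis using n by (simp add: i_def)
    qed
    have "w ! (Suc i mod n) \<noteq> inv_letter (w ! i)" using assms i unfolding cyc_char n_def by simp
    hence "w ! (n - 1 - j) \<noteq> inv_letter (w ! i)" using si by simp
    moreover have "inv_word w ! (Suc j mod length (inv_word w)) = inv_letter (w ! i)"
      using n by (simp add: nth_inv_word n_def i_def)
    moreover have "inv_word w ! j = inv_letter (w ! (n - 1 - j))" using j by (simp add: nth_inv_word n_def)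
    ultimately show "inv_word w ! (Suc j mod length (inv_word w)) \<noteq> inv_letter (inv_word w ! j)"
      by (metis inv_inv)
  qed
qed

lemma cw_nth: "t < length w \<Longrightarrow> cw w (int t) = w ! t"
  by (simp add: cw_def)

lemma cw_cong: "i mod int (length w) = j mod int (length w) \<Longrightarrow> cw w i = cw w j"
  by (simp add: cw_def)

lemma cw_rotate: assumes "length w > 0" shows "cw (rotate r w) i = cw w (int r + i)"
proof -
  define k where "k = length w"
  have k: "k > 0" using assms k_def by simp
  have "cw (rotate r w) i = w ! ((r + nat (i mod int k)) mod k)"
  proof -
    have "nat (i mod int k) < k" using k by (simp add: nat_less_iff)
    thus ?thesis by (simp add: cw_def nth_rotate k_def)
  qed
  also have "(r + nat (i mod int k)) mod k = nat ((int r + i) mod int k)"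
  proof -
    have "int ((r + nat (i mod int k)) mod k) = (int r + i mod int k) mod int k"
      using k by (simp add: zmod_int)
    also have "\<dots> = (int r + i) mod int k" by (simp add: mod_add_right_eq)
    finally show ?thesis by simp
  qed
  finally show ?thesis by (simp add: cw_def k_def)
qed

lemma cw_inv_word: assumes "length w > 0" shows "cw (inv_word w) i = inv_letter (cw w (- 1 - i))"
proof -
  define k where "k = length w"
  have k: "k > 0" using assms k_def by simp
  have lt: "nat (i mod int k) < k" using k by (simp add: nat_less_iff)
  have ge: "0 \<le> i mod int k" using k by simp
  have "cw (inv_word w) i = inv_letter (w ! (k - 1 - nat (i mod int k)))"
    using lt by (simp add: cw_def nth_inv_word k_def)
  also have "k - 1 - nat (i mod int k) = nat ((- 1 - i) mod int k)"
  proof -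
    have "int (k - 1 - nat (i mod int k)) = int k - 1 - i mod int k" using lt ge by (simp add: of_nat_diff)
    also have "\<dots> = (- 1 - i) mod int k"
    proof -
      have "0 \<le> int k - 1 - i mod int k" "int k - 1 - i mod int k < int k" using lt ge k by linarith+
      moreover have "(int k - 1 - i mod int k) mod int k = (- 1 - i) mod int k"
      proof -
        have "(int k - 1 - i mod int k) mod int k = (int k - 1 - i) mod int k"
          using mod_diff_right_eq[of "int k - 1" i "int k"] by simp
        also have "int k - 1 - i = (- 1 - i) + int k" by simp
        also have "((- 1 - i) + int k) mod int k = (- 1 - i) mod int k" by simp
        finally show ?thesis .
      qed
      ultimately show ?thesis by (metis mod_pos_pos_trivial)
    qed
    finally show ?thesis by simp
  qed
  finally show ?thesis by (simp add: cw_def k_def)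
qed

lemma det_count:
  assumes m: "m \<ge> 2" and ps: "p + s \<le> k" and S: "S \<subseteq> Rw m k"
    and det: "\<And>w x. w \<in> S \<Longrightarrow> p \<le> x \<Longrightarrow> x < p + s \<Longrightarrow> \<sigma> x < x \<and> w ! x = F x (w ! \<sigma> x)"
  shows "real (card S) \<le> 4 * real (2*m-1)^(k-s)"
proof -
  define g where "g = (\<lambda>w::letter list. take p w @ drop (p+s) w)"
  have inj: "inj_on g S"
  proof (rule inj_onI)
    fix w1 w2 assume w1: "w1 \<in> S" and w2: "w2 \<in> S" and eq: "g w1 = g w2"
    have l1: "length w1 = k" and l2: "length w2 = k" using w1 w2 S by (auto simp: Rw_def)
    have tk: "take p w1 = take p w2" and dr: "drop (p+s) w1 = drop (p+s) w2"
      using eq l1 l2 ps unfolding g_def by (auto simp: append_eq_append_conv)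
    have "\<forall>x<k. w1 ! x = w2 ! x"
    proof (intro allI)
      fix x show "x < k \<longrightarrow> w1 ! x = w2 ! x"
      proof (induction x rule: less_induct)
        case (less x)
        show ?case
        proof
          assume xk: "x < k"
          show "w1 ! x = w2 ! x"
          proof (cases "x < p")
            case True thus ?thesis using tk by (metis nth_take)
          next
            case False
            show ?thesis
            proof (cases "x < p + s")
              case True
              have d1: "\<sigma> x < x" "w1 ! x = F x (w1 ! \<sigma> x)" using det[OF w1] False True by auto
              have d2: "w2 ! x = F x (w2 ! \<sigma> x)" using det[OF w2] False True by auto
              have "w1 ! \<sigma> x = w2 ! \<sigma> x" using less.IH[OF d1(1)] d1(1) xk by simp
              thus ?thesis using d1 d2 by simp
            next
              case False
              hence "x = (p+s) + (x - (p+s))" by simp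
              moreover have "drop (p+s) w1 ! (x - (p+s)) = drop (p+s) w2 ! (x - (p+s))" using dr by simp
              ultimately show ?thesis using l1 l2 xk ps False by simp
            qed
          qed
        qed
      qed
    qed
    thus "w1 = w2" using l1 l2 by (metis nth_equalityI)
  qed
  have img: "g ` S \<subseteq> (\<lambda>(a,b). a @ b) ` (Rw m p \<times> Rw m (k - (p+s)))"
  proof
    fix v assume "v \<in> g ` S"
    then obtain w where w: "w \<in> S" "v = g w" by auto
    have "w \<in> Rw m k" using w S by auto
    hence "take p w \<in> Rw m p" "drop (p+s) w \<in> Rw m (k - (p+s))"
      using ps by (auto simp: Rw_def reduced_take reduced_drop dest: in_set_takeD in_set_dropD)
    thus "v \<in> (\<lambda>(a,b). a @ b) ` (Rw m p \<times> Rw m (k - (p+s)))" using w g_def by force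
  qed
  have "card S = card (g ` S)" using card_image[OF inj] by simp
  also have "\<dots> \<le> card ((\<lambda>(a,b). a @ b) ` (Rw m p \<times> Rw m (k - (p+s))))"
    by (rule card_mono[OF _ img]) simp
  also have "\<dots> \<le> card (Rw m p \<times> Rw m (k - (p+s)))" by (rule card_image_le) simp
  also have "\<dots> = card (Rw m p) * card (Rw m (k - (p+s)))" by (rule card_cartesian_product)
  finally have "real (card S) \<le> real (card (Rw m p)) * real (card (Rw m (k - (p+s))))"
    by (metis of_nat_le_iff of_nat_mult)
  also have "\<dots> \<le> (2 * real (2*m-1)^p) * (2 * real (2*m-1)^(k - (p+s)))"
    using m by (intro mult_mono card_Rw_le) auto
  also have "\<dots> = 4 * (real (2*m-1)^p * real (2*m-1)^(k - (p+s)))" by simp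
  also have "real (2*m-1)^p * real (2*m-1)^(k - (p+s)) = real (2*m-1)^(k-s)"
    using ps by (simp add: power_add[symmetric])
  finally show ?thesis by simp
qed

lemma CR_Rw: "CR m k \<subseteq> Rw m k" by (auto simp: CR_def Rw_def cyc_reduced_def)

lemma rotate_CR: "w \<in> CR m k \<Longrightarrow> rotate r w \<in> CR m k"
  by (auto simp: CR_def cyc_rotate)

lemma modh1: "(x + (y mod n + z)) mod n = (x + y + z) mod (n::int)"
  by (metis add.assoc mod_add_left_eq mod_add_right_eq)
lemma modh2: "(x + (y mod n - z)) mod n = (x + y - z) mod (n::int)"
  by (metis add_diff_eq mod_add_right_eq mod_diff_left_eq)

lemma modh3: "(x mod n + y + z) mod n = (x + y + z) mod (n::int)"
  by (metis add.assoc mod_add_left_eq)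
lemma modh4: "(x mod n + y - z) mod n = (x + y - z) mod (n::int)"
  by (metis add_diff_eq mod_add_left_eq)

lemma P0_count:
  assumes m: "m \<ge> 2" and d: "d + s \<le> k" "0 < d" and S: "S \<subseteq> CR m k"
    and P: "\<And>w t. w \<in> S \<Longrightarrow> t < s \<Longrightarrow> w ! t = w ! (d + t)"
  shows "real (card S) \<le> 4 * real (2*m-1)^(k-s)"
proof (rule det_count[OF m d(1), where \<sigma> = "\<lambda>x. x - d" and F = "\<lambda>_ y. y"])
  show "S \<subseteq> Rw m k" using S CR_Rw by blast
next
  fix w x assume "w \<in> S" "d \<le> x" "x < d + s"
  thus "x - d < x \<and> w ! x = w ! (x - d)" using P[of w "x - d"] d by auto
qed

lemma P_half:
  assumes m: "m \<ge> 2" and s: "1 \<le> s" "2*s \<le> k" and ab: "a mod int k \<noteq> b mod int k"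
    and half: "2 * nat ((b - a) mod int k) \<le> k"
  shows "real (card {w\<in>CR m k. \<forall>t<s. cw w (a + int t) = cw w (b + int t)}) \<le> 4 * real (2*m-1)^(k-s)"
proof -
  define S where "S = {w\<in>CR m k. \<forall>t<s. cw w (a + int t) = cw w (b + int t)}"
  have k: "k > 0" using s by simp
  define d where "d = nat ((b - a) mod int k)"
  define r where "r = nat (a mod int k)"
  have d0: "d > 0"
  proof -
    have "(b - a) mod int k \<noteq> 0" using ab by (metis mod_eq_dvd_iff dvd_eq_mod_eq_0)
    moreover have "(b - a) mod int k \<ge> 0" using k by simp
    ultimately show ?thesis by (simp add: d_def)
  qed
  have ds: "d + s \<le> k" using half s by (simp add: d_def)
  have inj: "inj_on (rotate r) S" by (auto intro: inj_onI rotate_inj)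
  have "real (card (rotate r ` S)) \<le> 4 * real (2*m-1)^(k-s)"
  proof (rule P0_count[OF m ds d0])
    show "rotate r ` S \<subseteq> CR m k" using rotate_CR by (auto simp: S_def)
  next
    fix v t assume v: "v \<in> rotate r ` S" and t: "t < s"
    then obtain w where w: "w \<in> S" "v = rotate r w" by auto
    have lw: "length w = k" using w by (auto simp: S_def CR_def)
    have c: "cw w (a + int t) = cw w (b + int t)" using w t by (auto simp: S_def)
    have "v ! t = cw v (int t)" using t s lw w by (simp add: cw_nth)
    also have "\<dots> = cw w (int r + int t)" using w lw k by (simp add: cw_rotate)
    also have "\<dots> = cw w (a + int t)"
      by (rule cw_cong) (simp add: lw r_def mod_simps k)
    also have "\<dots> = cw w (b + int t)" by (rule c)
    also have "\<dots> = cw w (int r + int (d + t))"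
      by (rule cw_cong) (simp add: lw r_def d_def mod_simps k modh1 modh3)
    also have "\<dots> = cw v (int (d + t))" using w lw k by (simp add: cw_rotate)
    also have "\<dots> = v ! (d + t)" using t ds lw w cw_nth[of "d+t" v] by simp
    finally show "v ! t = v ! (d + t)" .
  qed
  thus ?thesis using card_image[OF inj] by (simp add: S_def)
qed

lemma P_count:
  assumes m: "m \<ge> 2" and s: "1 \<le> s" "2*s \<le> k" and ab: "a mod int k \<noteq> b mod int k"
  shows "real (card {w\<in>CR m k. \<forall>t<s. cw w (a + int t) = cw w (b + int t)}) \<le> 4 * real (2*m-1)^(k-s)"
proof (cases "2 * nat ((b - a) mod int k) \<le> k")
  case True thus ?thesis using P_half[OF assms] by simp
next
  case False
  have k: "k > 0" using s by simp
  have ba: "b mod int k \<noteq> a mod int k" using ab by simp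
  have "(b - a) mod int k + (a - b) mod int k = int k"
  proof -
    have "(b - a) mod int k \<noteq> 0" using ab by (metis mod_eq_dvd_iff dvd_eq_mod_eq_0)
    moreover have "(a - b) mod int k = (- (b - a)) mod int k" by simp
    ultimately show ?thesis using k by (simp only: zmod_zminus1_eq_if) simp
  qed
  hence "2 * nat ((a - b) mod int k) \<le> k" using False k by (simp add: nat_diff_distrib)
  hence "real (card {w\<in>CR m k. \<forall>t<s. cw w (b + int t) = cw w (a + int t)}) \<le> 4 * real (2*m-1)^(k-s)"
    using P_half[OF m s ba] by simp
  moreover have "{w\<in>CR m k. \<forall>t<s. cw w (b + int t) = cw w (a + int t)} =
      {w\<in>CR m k. \<forall>t<s. cw w (a + int t) = cw w (b + int t)}" by auto
  ultimately show ?thesis by simp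
qed

lemma I_count:
  assumes m: "m \<ge> 2" and s: "1 \<le> s" "2*s \<le> k"
  shows "real (card {w\<in>CR m k. \<forall>t<s. cw w (a + int t) = inv_letter (cw w (c - int t))}) \<le> 4 * real (2*m-1)^(k-s)"
proof -
  define S where "S = {w\<in>CR m k. \<forall>t<s. cw w (a + int t) = inv_letter (cw w (c - int t))}"
  have k: "k > 0" using s by simp
  define e where "e = nat ((c - a) mod int k)"
  define r where "r = nat (a mod int k)"
  have ek: "e < k" using k by (simp add: e_def nat_less_iff)
  have inj: "inj_on (rotate r) S" by (auto intro: inj_onI rotate_inj)
  have key: "\<And>v t. v \<in> rotate r ` S \<Longrightarrow> t < s \<Longrightarrow> t \<le> e \<Longrightarrow> v ! t = inv_letter (v ! (e - t))"
  proof -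
    fix v t assume v: "v \<in> rotate r ` S" and t: "t < s" "t \<le> e"
    then obtain w where w: "w \<in> S" "v = rotate r w" by auto
    have lw: "length w = k" using w by (auto simp: S_def CR_def)
    have c: "cw w (a + int t) = inv_letter (cw w (c - int t))" using w t by (auto simp: S_def)
    have "v ! t = cw v (int t)" using t s lw w by (simp add: cw_nth)
    also have "\<dots> = cw w (int r + int t)" using w lw k by (simp add: cw_rotate)
    also have "\<dots> = cw w (a + int t)"
      by (rule cw_cong) (simp add: lw r_def mod_simps k)
    also have "\<dots> = inv_letter (cw w (c - int t))" by (rule c)
    also have "cw w (c - int t) = cw w (int r + int (e - t))"
    proof (rule cw_cong)
      have "int (e - t) = int e - int t" using t by simp
      thus "(c - int t) mod int (length w) = (int r + int (e - t)) mod int (length w)"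
        by (simp add: lw r_def e_def mod_simps k modh2 modh4)
    qed
    also have "\<dots> = cw v (int (e - t))" using w lw k by (simp add: cw_rotate)
    also have "\<dots> = v ! (e - t)" using ek lw w by (simp add: cw_nth)
    finally show "v ! t = inv_letter (v ! (e - t))" .
  qed
  have "real (card (rotate r ` S)) \<le> 4 * real (2*m-1)^(k-s)"
  proof (cases "2*s \<le> e + 1")
    case True
    show ?thesis
    proof (rule det_count[OF m, where p = "e + 1 - s" and \<sigma> = "\<lambda>x. e - x" and F = "\<lambda>_ y. inv_letter y"])
      show "e + 1 - s + s \<le> k" using True ek by simp
      show "rotate r ` S \<subseteq> Rw m k" using rotate_CR CR_Rw by (fastforce simp: S_def)
    next
      fix v x assume v: "v \<in> rotate r ` S" and x: "e + 1 - s \<le> x" "x < e + 1 - s + s"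
      have "v ! (e - x) = inv_letter (v ! (e - (e - x)))" using key[OF v, of "e - x"] x True by auto
      moreover have "e - (e - x) = x" using x True by simp
      ultimately show "e - x < x \<and> v ! x = inv_letter (v ! (e - x))" using x True by auto
    qed
  next
    case False
    have "rotate r ` S = {}"
    proof (rule ccontr)
      assume "rotate r ` S \<noteq> {}"
      then obtain v where v: "v \<in> rotate r ` S" by blast
      then obtain w where w: "w \<in> S" "v = rotate r w" by auto
      have vCR: "v \<in> CR m k" using w rotate_CR by (auto simp: S_def)
      hence red: "reduced_word v" and lv: "length v = k" by (auto simp: CR_def cyc_reduced_def)
      define t0 where "t0 = e div 2"
      have t0s: "t0 < s" using False by (simp add: t0_def)
      have h: "v ! t0 = inv_letter (v ! (e - t0))" using key[OF v t0s] by (simp add: t0_def)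
      show False
      proof (cases "e - t0 = t0")
        case True thus False using h by simp
      next
        case False
        hence e1: "e - t0 = Suc t0" by (simp add: t0_def)
        have "Suc t0 < k" using e1 ek by simp
        hence "v ! Suc t0 \<noteq> inv_letter (v ! t0)" using red lv by (simp add: reduced_word_def)
        thus False using h e1 by (metis inv_inv)
      qed
    qed
    thus ?thesis by simp
  qed
  thus ?thesis using card_image[OF inj] by (simp add: S_def)
qed

definition fl :: "bool \<Rightarrow> letter list \<Rightarrow> letter list" where
  "fl f x = (if f then inv_word x else x)"

lemma fl_inj: "fl f x = fl f y \<Longrightarrow> x = y"
  by (cases f) (auto simp: fl_def dest: arg_cong[of _ _ inv_word])

lemma length_fl[simp]: "length (fl f x) = length x" by (simp add: fl_def)

lemma fl_CR: "x \<in> CR m k \<Longrightarrow> fl f x \<in> CR m k"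
  by (auto simp: fl_def CR_def cyc_inv_word set_inv_word)

lemma cr_words_CR: "x \<in> cr_words m l \<longleftrightarrow> x \<in> CR m (length x) \<and> length x \<le> l"
  by (auto simp: cr_words_def CR_def Alph_def)

lemma finite_cr_words: "finite (cr_words m l)"
proof -
  have "cr_words m l \<subseteq> {w. set w \<subseteq> Alph m \<and> length w \<le> l}" by (auto simp: cr_words_def Alph_def)
  thus ?thesis using finite_lists_length_le[OF finite_Alph] finite_subset by blast
qed

definition Esame :: "nat \<Rightarrow> nat \<Rightarrow> nat \<Rightarrow> nat \<Rightarrow> bool \<Rightarrow> bool \<Rightarrow> letter list \<Rightarrow> bool" where
  "Esame s h a b f g x \<longleftrightarrow> rotate a (fl f x) \<noteq> rotate b (fl g x) \<and>
      take s (rotate a (fl f x)) = take s (rotate b (fl g x)) \<and> h \<le> length x"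

definition Ediff :: "nat \<Rightarrow> nat \<Rightarrow> nat \<Rightarrow> bool \<Rightarrow> bool \<Rightarrow> letter list \<Rightarrow> letter list \<Rightarrow> bool" where
  "Ediff s a b f g x y \<longleftrightarrow> take s (rotate a (fl f x)) = take s (rotate b (fl g y))"

lemma take_eq_nth: "take s u = take s v \<Longrightarrow> t < s \<Longrightarrow> t < length u \<Longrightarrow> t < length v \<Longrightarrow> u ! t = v ! t"
  by (metis nth_take)

lemma same_count_k:
  assumes m: "m \<ge> 2" and s: "1 \<le> s" "2*s \<le> k"
  shows "real (card {x\<in>CR m k. Esame s h a b f g x}) \<le> 4 * real (2*m-1)^(k-s)"
proof -
  define S where "S = {x\<in>CR m k. Esame s h a b f g x}"
  have k: "k > 0" using s by simp
  have inj: "inj_on (fl f) S" by (auto intro: inj_onI fl_inj)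
  have gen: "\<And>x t. x \<in> S \<Longrightarrow> t < s \<Longrightarrow> cw (fl f x) (int a + int t) = cw (fl g x) (int b + int t)"
  proof -
    fix x t assume x: "x \<in> S" and t: "t < s"
    have lx: "length x = k" using x by (auto simp: S_def CR_def)
    have tk: "take s (rotate a (fl f x)) = take s (rotate b (fl g x))" using x by (auto simp: S_def Esame_def)
    have "rotate a (fl f x) ! t = rotate b (fl g x) ! t"
      using take_eq_nth[OF tk t] t s lx by simp
    moreover have "rotate a (fl f x) ! t = cw (fl f x) (int a + int t)"
      using cw_nth[of t "rotate a (fl f x)"] cw_rotate[of "fl f x" a "int t"] t s lx k by simp
    moreover have "rotate b (fl g x) ! t = cw (fl g x) (int b + int t)"
      using cw_nth[of t "rotate b (fl g x)"] cw_rotate[of "fl g x" b "int t"] t s lx k by simp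
    ultimately show "cw (fl f x) (int a + int t) = cw (fl g x) (int b + int t)" by simp
  qed
  show ?thesis
  proof (cases "S = {}")
    case True
    have "0 \<le> 4 * real (2*m-1)^(k-s)" by simp
    moreover have "card S = 0" using True by simp
    ultimately show ?thesis unfolding S_def by simp
  next
    case Sne: False
    show ?thesis
    proof (cases "f = g")
      case True
      have ab: "int a mod int k \<noteq> int b mod int k"
      proof
        assume "int a mod int k = int b mod int k"
        hence abk: "a mod k = b mod k" by (metis of_nat_eq_iff zmod_int)
        obtain x where x: "x \<in> S" using Sne by blast
        hence "length (fl f x) = k" by (auto simp: S_def CR_def)
        hence "rotate a (fl f x) = rotate b (fl g x)" using abk True
          rotate_conv_mod[of a "fl f x"] rotate_conv_mod[of b "fl f x"] by simp
        thus False using x by (auto simp: S_def Esame_def)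
      qed
      have sub: "fl f ` S \<subseteq> {w\<in>CR m k. \<forall>t<s. cw w (int a + int t) = cw w (int b + int t)}"
        using gen True fl_CR by (auto simp: S_def)
      have "real (card (fl f ` S)) \<le> real (card {w\<in>CR m k. \<forall>t<s. cw w (int a + int t) = cw w (int b + int t)})"
        by (intro of_nat_mono card_mono[OF _ sub], rule finite_subset[OF _ finite_Rw[of m k]])
           (auto simp: CR_def Rw_def cyc_reduced_def)
      also have "\<dots> \<le> 4 * real (2*m-1)^(k-s)" by (rule P_count[OF m s ab])
      finally show ?thesis using card_image[OF inj] by (simp add: S_def)
    next
      case False
      have flg: "\<And>x. fl g x = inv_word (fl f x)" using False by (cases f; cases g) (auto simp: fl_def)
      have sub: "fl f ` S \<subseteq> {w\<in>CR m k. \<forall>t<s. cw w (int a + int t) = inv_letter (cw w ((- 1 - int b) - int t))}"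
      proof
        fix w assume "w \<in> fl f ` S"
        then obtain x where x: "x \<in> S" "w = fl f x" by auto
        have lw: "length w > 0" using x k by (auto simp: S_def CR_def)
        have "\<forall>t<s. cw w (int a + int t) = inv_letter (cw w ((- 1 - int b) - int t))"
        proof (intro allI impI)
          fix t assume t: "t < s"
          have "cw w (int a + int t) = cw (inv_word w) (int b + int t)" using gen[OF x(1) t] x flg by simp
          also have "\<dots> = inv_letter (cw w (- 1 - (int b + int t)))" by (rule cw_inv_word[OF lw])
          finally show "cw w (int a + int t) = inv_letter (cw w ((- 1 - int b) - int t))" by (simp add: algebra_simps)
        qed
        thus "w \<in> {w\<in>CR m k. \<forall>t<s. cw w (int a + int t) = inv_letter (cw w ((- 1 - int b) - int t))}"
          using x fl_CR by (auto simp: S_def)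
      qed
      have fin: "finite {w\<in>CR m k. \<forall>t<s. cw w (int a + int t) = inv_letter (cw w ((- 1 - int b) - int t))}"
        by (rule finite_subset[OF _ finite_Rw[of m k]]) (auto simp: CR_def Rw_def cyc_reduced_def)
      have "real (card (fl f ` S)) \<le> real (card {w\<in>CR m k. \<forall>t<s. cw w (int a + int t) = inv_letter (cw w ((- 1 - int b) - int t))})"
        by (intro of_nat_mono card_mono[OF fin sub])
      also have "\<dots> \<le> 4 * real (2*m-1)^(k-s)" by (rule I_count[OF m s])
      finally show ?thesis using card_image[OF inj] by (simp add: S_def)
    qed
  qed
qed

lemma same_count:
  assumes m: "m \<ge> 2" and s: "1 \<le> s" "2*s \<le> h"
  shows "real (card {x\<in>cr_words m l. Esame s h a b f g x}) \<le> real (l+1) * (4 * real (2*m-1)^(l-s))"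
proof -
  have eq: "{x\<in>cr_words m l. Esame s h a b f g x} = (\<Union>k\<in>{..l}. {x\<in>CR m k. Esame s h a b f g x})"
    by (auto simp: cr_words_CR CR_def)
  have fin: "\<And>k. finite {x\<in>CR m k. Esame s h a b f g x}"
    by (rule finite_subset[OF _ finite_Rw]) (auto simp: CR_def Rw_def cyc_reduced_def)
  have bk: "\<And>k. k \<in> {..l} \<Longrightarrow> real (card {x\<in>CR m k. Esame s h a b f g x}) \<le> 4 * real (2*m-1)^(l-s)"
  proof -
    fix k assume k: "k \<in> {..l}"
    show "real (card {x\<in>CR m k. Esame s h a b f g x}) \<le> 4 * real (2*m-1)^(l-s)"
    proof (cases "h \<le> k")
      case False
      hence "{x\<in>CR m k. Esame s h a b f g x} = {}" by (auto simp: CR_def Esame_def)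
      hence "card {x\<in>CR m k. Esame s h a b f g x} = 0" by (simp only: card.empty)
      thus ?thesis by simp
    next
      case True
      have "real (card {x\<in>CR m k. Esame s h a b f g x}) \<le> 4 * real (2*m-1)^(k-s)"
        using same_count_k[OF m s(1)] True s by simp
      also have "\<dots> \<le> 4 * real (2*m-1)^(l-s)" using m k by (intro mult_left_mono power_increasing) auto
      finally show ?thesis .
    qed
  qed
  have "card {x\<in>cr_words m l. Esame s h a b f g x} \<le> (\<Sum>k\<in>{..l}. card {x\<in>CR m k. Esame s h a b f g x})"
    unfolding eq by (rule card_UN_le) simp
  hence "real (card {x\<in>cr_words m l. Esame s h a b f g x}) \<le> (\<Sum>k\<in>{..l}. real (card {x\<in>CR m k. Esame s h a b f g x}))"
    unfolding of_nat_sum[symmetric] by (rule of_nat_mono)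
  also have "\<dots> \<le> (\<Sum>k\<in>{..l}. 4 * real (2*m-1)^(l-s))" by (rule sum_mono) (rule bk)
  also have "\<dots> = real (l+1) * (4 * real (2*m-1)^(l-s))" by simp
  finally show ?thesis .
qed


lemma diff_count:
  assumes m: "m \<ge> 2"
  shows "real (card {y\<in>cr_words m l. take s (rotate b (fl g y)) = z}) \<le> 4 * real (2*m-1)^(l-s)"
proof -
  define S where "S = {y\<in>cr_words m l. take s (rotate b (fl g y)) = z}"
  define G where "G = (\<lambda>y. drop s (rotate b (fl g y)))"
  have inj: "inj_on G S"
  proof (rule inj_onI)
    fix y1 y2 assume y: "y1 \<in> S" "y2 \<in> S" "G y1 = G y2"
    have "rotate b (fl g y1) = take s (rotate b (fl g y1)) @ G y1" by (simp add: G_def)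
    also have "\<dots> = take s (rotate b (fl g y2)) @ G y2" using y by (simp add: S_def)
    also have "\<dots> = rotate b (fl g y2)" by (simp add: G_def)
    finally show "y1 = y2" by (metis rotate_inj fl_inj)
  qed
  have sub: "G ` S \<subseteq> RL m (l - s)"
  proof
    fix v assume "v \<in> G ` S"
    then obtain y where y: "y \<in> S" "v = G y" by auto
    have "y \<in> CR m (length y)" "length y \<le> l" using y by (auto simp: S_def cr_words_CR)
    hence "rotate b (fl g y) \<in> CR m (length y)" using fl_CR rotate_CR by blast
    hence "reduced_word (rotate b (fl g y))" "set (rotate b (fl g y)) \<subseteq> Alph m"
      by (auto simp: CR_def cyc_reduced_def)
    moreover have "set v \<subseteq> set (rotate b (fl g y))" using y set_drop_subset[of s "rotate b (fl g y)"] by (simp add: G_def)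
    ultimately show "v \<in> RL m (l - s)" using y \<open>length y \<le> l\<close>
      by (auto simp: RL_def G_def reduced_drop)
  qed
  have "card S = card (G ` S)" using card_image[OF inj] by simp
  also have "\<dots> \<le> card (RL m (l - s))" by (rule card_mono[OF finite_RL sub])
  finally have "real (card S) \<le> real (card (RL m (l - s)))" by simp
  also have "\<dots> \<le> 4 * real (2*m-1)^(l-s)" by (rule card_RL_le[OF m])
  finally show ?thesis by (simp add: S_def)
qed


lemma hd_butlast2: "length w \<ge> 2 \<Longrightarrow> hd (butlast w) = hd w"
proof (cases w)
  case (Cons x xs)
  assume "length w \<ge> 2"
  hence "xs \<noteq> []" using Cons by auto
  thus ?thesis using Cons by simp
qed simp

lemma N_lower:
  assumes m: "m \<ge> 2" and l: "l \<ge> 2"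
  shows "real (2*m-1)^l / 2 \<le> real (card (cr_words m l))"
proof -
  define X where "X = {w\<in>Rw m l. last w = inv_letter (hd w)}"
  have sub1: "Rw m l \<subseteq> CR m l \<union> X"
    by (auto simp: Rw_def CR_def X_def cyc_reduced_def)
  have inj: "inj_on butlast X"
  proof (rule inj_onI)
    fix w1 w2 assume w: "w1 \<in> X" "w2 \<in> X" "butlast w1 = butlast w2"
    have l1: "length w1 = l" and l2: "length w2 = l" using w by (auto simp: X_def Rw_def)
    have "hd w1 = hd (butlast w1)" using l1 l hd_butlast2[of w1] by simp
    moreover have "hd w2 = hd (butlast w2)" using l2 l hd_butlast2[of w2] by simp
    ultimately have "hd w1 = hd w2" using w by simp
    hence "last w1 = last w2" using w by (simp add: X_def)
    moreover have "w1 \<noteq> []" "w2 \<noteq> []" using l1 l2 l by auto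
    ultimately show "w1 = w2" using w by (metis append_butlast_last_id)
  qed
  have sub2: "butlast ` X \<subseteq> Rw m (l - 1)"
    by (auto simp: X_def Rw_def reduced_take butlast_conv_take dest: in_set_takeD)
  have "card X = card (butlast ` X)" using card_image[OF inj] by simp
  also have "\<dots> \<le> card (Rw m (l - 1))" by (rule card_mono[OF finite_Rw sub2])
  finally have cX: "card X \<le> card (Rw m (l - 1))" .
  have finX: "finite X" by (rule finite_subset[OF _ finite_Rw[of m l]]) (auto simp: X_def)
  have finCR: "finite (CR m l)" by (rule finite_subset[OF _ finite_Rw[of m l]]) (auto simp: CR_def Rw_def cyc_reduced_def)
  have "card (Rw m l) \<le> card (CR m l \<union> X)" by (rule card_mono) (use finX finCR sub1 in auto)
  also have "\<dots> \<le> card (CR m l) + card X" by (rule card_Un_le)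
  finally have c1: "card (Rw m l) \<le> card (CR m l) + card (Rw m (l - 1))" using cX by simp
  have "CR m l \<subseteq> cr_words m l" by (auto simp: cr_words_CR CR_def)
  hence c2: "card (CR m l) \<le> card (cr_words m l)" by (rule card_mono[OF finite_cr_words])
  define q where "q = real (2*m-1)"
  have q: "q \<ge> 3" using m by (simp add: q_def)
  have r1: "real (card (Rw m l)) = (q+1) * q^(l-1)" using l m
    by (simp add: card_Rw q_def of_nat_diff)
  have r2: "real (card (Rw m (l-1))) = (q+1) * q^(l-2)" using l m
    by (simp add: card_Rw q_def of_nat_diff)
  have A: "real (card (cr_words m l)) \<ge> (q+1) * q^(l-1) - (q+1) * q^(l-2)"
  proof -
    have "real (card (Rw m l)) \<le> real (card (CR m l)) + real (card (Rw m (l - 1)))" using c1 by linarith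
    moreover have "l - 1 - 1 = l - 2" by simp
    ultimately show ?thesis using c2 r1 r2 by simp
  qed
  have B: "(q+1) * q^(l-1) - (q+1) * q^(l-2) = (q*q - 1) * q^(l-2)"
  proof -
    have "l - 1 = Suc (l - 2)" using l by simp
    hence "q^(l-1) = q * q^(l-2)" by simp
    thus ?thesis by (simp add: algebra_simps)
  qed
  have C: "(q*q/2) * q^(l-2) \<le> (q*q - 1) * q^(l-2)"
  proof (intro mult_right_mono)
    have "q*q \<ge> 3*3" using q by (intro mult_mono) auto
    thus "q*q/2 \<le> q*q - 1" by simp
  qed (use q in simp)
  have D: "(q*q/2) * q^(l-2) = q^l / 2"
  proof -
    have "l = Suc (Suc (l - 2))" using l by simp
    hence "q^l = q*(q*q^(l-2))" by (metis power_Suc)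
    thus ?thesis by (simp only: mult.assoc) simp
  qed
  have "q^l / 2 \<le> real (card (cr_words m l))" using A B C D by linarith
  thus ?thesis by (simp add: q_def)
qed

definition ins :: "nat \<Rightarrow> 'a \<Rightarrow> 'a list \<Rightarrow> 'a list" where
  "ins j y rest = take j rest @ y # drop j rest"

lemma ins_nth_same: "j \<le> length rest \<Longrightarrow> ins j y rest ! j = y"
  by (simp add: ins_def nth_append)

lemma ins_nth_other: "i \<noteq> j \<Longrightarrow> j \<le> length rest \<Longrightarrow> ins j y rest ! i = ins j y' rest ! i"
  by (auto simp: ins_def nth_append nth_Cons')

lemma tuple_count:
  assumes j: "j < n" and W: "finite W"
    and bound: "\<And>rest. length rest = n - 1 \<Longrightarrow> set rest \<subseteq> W \<Longrightarrow> real (card {y\<in>W. Q (ins j y rest)}) \<le> M"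
  shows "real (card {rs. length rs = n \<and> set rs \<subseteq> W \<and> Q rs}) \<le> real (card W)^(n-1) * M"
proof -
  define T where "T = {rest. set rest \<subseteq> W \<and> length rest = n - 1}"
  define S where "S = {rs. length rs = n \<and> set rs \<subseteq> W \<and> Q rs}"
  define Ph where "Ph = (\<lambda>rs::'a list. (take j rs @ drop (Suc j) rs, rs ! j))"
  have bkw: "\<And>rs. rs \<in> S \<Longrightarrow> ins j (snd (Ph rs)) (fst (Ph rs)) = rs"
  proof -
    fix rs assume "rs \<in> S"
    hence l: "length rs = n" by (simp add: S_def)
    have "take j (take j rs @ drop (Suc j) rs) = take j rs" using l j by simp
    moreover have "drop j (take j rs @ drop (Suc j) rs) = drop (Suc j) rs" using l j by simp
    ultimately show "ins j (snd (Ph rs)) (fst (Ph rs)) = rs"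
      using l j by (simp add: ins_def Ph_def id_take_nth_drop[symmetric])
  qed
  have inj: "inj_on Ph S" by (rule inj_onI) (metis bkw)
  have sub: "Ph ` S \<subseteq> Sigma T (\<lambda>rest. {y\<in>W. Q (ins j y rest)})"
  proof
    fix z assume "z \<in> Ph ` S"
    then obtain rs where rs: "rs \<in> S" "z = Ph rs" by auto
    have l: "length rs = n" and sW: "set rs \<subseteq> W" and q: "Q rs" using rs by (auto simp: S_def)
    have "set (take j rs @ drop (Suc j) rs) \<subseteq> W" using sW
      by (auto dest: in_set_takeD in_set_dropD)
    moreover have "length (take j rs @ drop (Suc j) rs) = n - 1" using l j by simp
    moreover have "rs ! j \<in> W" using sW l j by auto
    moreover have "Q (ins j (snd (Ph rs)) (fst (Ph rs)))" using bkw[OF rs(1)] q by simp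
    ultimately show "z \<in> Sigma T (\<lambda>rest. {y\<in>W. Q (ins j y rest)})" using rs by (auto simp: T_def Ph_def)
  qed
  have finT: "finite T" unfolding T_def by (rule finite_lists_length_eq[OF W])
  have "card S = card (Ph ` S)" using card_image[OF inj] by simp
  also have "\<dots> \<le> card (Sigma T (\<lambda>rest. {y\<in>W. Q (ins j y rest)}))"
    by (rule card_mono[OF _ sub]) (use finT W in auto)
  also have "\<dots> = (\<Sum>rest\<in>T. card {y\<in>W. Q (ins j y rest)})" by (rule card_SigmaI) (use finT W in auto)
  finally have "real (card S) \<le> (\<Sum>rest\<in>T. real (card {y\<in>W. Q (ins j y rest)}))"
    unfolding of_nat_sum[symmetric] by (rule of_nat_mono)
  also have "\<dots> \<le> (\<Sum>rest\<in>T. M)" by (rule sum_mono) (auto simp: T_def intro: bound)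
  also have "\<dots> = real (card T) * M" by simp
  also have "card T = card W ^ (n - 1)" unfolding T_def by (rule card_lists_length_eq[OF W])
  finally show ?thesis by (simp add: S_def)
qed

lemma sym_mem: "u \<in> symmetrized R \<Longrightarrow> \<exists>r\<in>R. \<exists>f k. u = rotate k (fl f r)"
  unfolding symmetrized_def cyclic_conjugates_def fl_def
  by (auto intro: exI[of _ True] exI[of _ False])

lemma prefix_take: "prefix p u \<Longrightarrow> s \<le> length p \<Longrightarrow> take s u = take s p"
  by (auto simp: prefix_def)

lemma bad_contain:
  fixes lam :: real
  assumes sh: "2*s \<le> h" and s1: "1 \<le> s" and lam: "0 \<le> lam" and sdef: "s = nat \<lceil>lam * real h\<rceil>"
    and rs: "length rs = n" "set rs \<subseteq> cr_words m l" and nsc: "\<not> small_cancellation lam (set rs)"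
    and long: "\<forall>i<n. h \<le> length (rs ! i)"
  shows "\<exists>i<n. \<exists>j<n. \<exists>a<l. \<exists>b<l. \<exists>f g. (i = j \<and> Esame s h a b f g (rs ! i)) \<or>
            (i \<noteq> j \<and> Ediff s a b f g (rs ! i) (rs ! j))"
proof -
  obtain u v p where uv: "u \<in> symmetrized (set rs)" "v \<in> symmetrized (set rs)" "u \<noteq> v"
    and p: "prefix p u" "prefix p v" and pl: "\<not> real (length p) < lam * real (min (length u) (length v))"
    using nsc unfolding small_cancellation_def by blast
  obtain r1 f k1 where r1: "r1 \<in> set rs" "u = rotate k1 (fl f r1)" using sym_mem[OF uv(1)] by blast
  obtain r2 g k2 where r2: "r2 \<in> set rs" "v = rotate k2 (fl g r2)" using sym_mem[OF uv(2)] by blast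
  obtain i where i: "i < n" "rs ! i = r1" using r1(1) rs(1) by (metis in_set_conv_nth)
  obtain j where j: "j < n" "rs ! j = r2" using r2(1) rs(1) by (metis in_set_conv_nth)
  have h1: "h \<le> length r1" "h \<le> length r2" using long i j by auto
  have r1W: "length r1 \<le> l" "length r2 \<le> l" using r1(1) r2(1) rs(2) by (auto simp: cr_words_def)
  have pos: "length r1 > 0" "length r2 > 0" using h1 sh s1 by auto
  define a where "a = k1 mod length r1"
  define b where "b = k2 mod length r2"
  have "a < length r1" using pos by (simp add: a_def)
  hence a: "a < l" using r1W by linarith
  have "b < length r2" using pos by (simp add: b_def)
  hence b: "b < l" using r1W by linarith
  have ua: "u = rotate a (fl f r1)" using r1(2) a_def rotate_conv_mod[of k1 "fl f r1"] by simp
  have vb: "v = rotate b (fl g r2)" using r2(2) b_def rotate_conv_mod[of k2 "fl g r2"] by simp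
  have "real (min (length u) (length v)) \<ge> real h" using h1 ua vb by simp
  hence "lam * real (min (length u) (length v)) \<ge> lam * real h" using lam by (rule mult_left_mono)
  hence "real (length p) \<ge> lam * real h" using pl by linarith
  hence "s \<le> length p" using sdef by (simp add: nat_le_iff ceiling_le_iff)
  hence tk: "take s u = take s v" using prefix_take[OF p(1)] prefix_take[OF p(2)] by simp
  show ?thesis
  proof (cases "i = j")
    case True
    hence "r1 = r2" using i j by simp
    hence "Esame s h a b f g (rs ! i)" using uv(3) tk ua vb h1 i by (simp add: Esame_def)
    thus ?thesis using i j a b True by blast
  next
    case False
    have "Ediff s a b f g (rs ! i) (rs ! j)" using tk ua vb i j by (simp add: Ediff_def)
    thus ?thesis using i j a b False by blast
  qed
qed

lemma bad_card:
  fixes lam :: real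
  assumes m: "m \<ge> 2" and sh: "2*s \<le> h" and s1: "1 \<le> s" and lam: "0 \<le> lam"
    and sdef: "s = nat \<lceil>lam * real h\<rceil>"
  shows "real (card {rs. length rs = n \<and> set rs \<subseteq> cr_words m l \<and> \<not> small_cancellation lam (set rs)})
     \<le> real (card (cr_words m l))^(n-1) * (real n * (4 * real (2*m-1)^h)
          + real (4*n*n*l*l) * (real (l+1) * (4 * real (2*m-1)^(l-s))))"
proof -
  define W where "W = cr_words m l"
  define q where "q = real (2*m-1)"
  define N where "N = real (card W)"
  define B where "B = real (l+1) * (4 * q^(l-s))"
  define Bd where "Bd = {rs. length rs = n \<and> set rs \<subseteq> W \<and> \<not> small_cancellation lam (set rs)}"
  define Sh where "Sh = (\<lambda>i. {rs. length rs = n \<and> set rs \<subseteq> W \<and> length (rs ! i) < h})"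
  define Idx where "Idx = {..<n} \<times> {..<n} \<times> {..<l} \<times> {..<l} \<times> (UNIV::bool set) \<times> (UNIV::bool set)"
  define Qf where "Qf = (\<lambda>(i,j,a,b,f,g) rs. (i = j \<and> Esame s h a b f g (rs ! i)) \<or>
                          (i \<noteq> j \<and> Ediff s a b f g (rs ! i) (rs ! j)))"
  define Ev where "Ev = (\<lambda>\<iota>. {rs. length rs = n \<and> set rs \<subseteq> W \<and> Qf \<iota> rs})"
  have finW: "finite W" by (simp add: W_def finite_cr_words)
  have finL: "\<And>P. finite {rs. length rs = n \<and> set rs \<subseteq> W \<and> P rs}"
  proof -
    fix P
    have "{rs. length rs = n \<and> set rs \<subseteq> W \<and> P rs} \<subseteq> {rs. set rs \<subseteq> W \<and> length rs = n}" by auto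
    thus "finite {rs. length rs = n \<and> set rs \<subseteq> W \<and> P rs}"
      using finite_lists_length_eq[OF finW] finite_subset by blast
  qed
  have fIdx: "finite Idx" by (simp add: Idx_def)
  have contain: "Bd \<subseteq> (\<Union>i\<in>{..<n}. Sh i) \<union> (\<Union>\<iota>\<in>Idx. Ev \<iota>)"
  proof
    fix rs assume rs: "rs \<in> Bd"
    show "rs \<in> (\<Union>i\<in>{..<n}. Sh i) \<union> (\<Union>\<iota>\<in>Idx. Ev \<iota>)"
    proof (cases "\<forall>i<n. h \<le> length (rs ! i)")
      case False
      thus ?thesis using rs by (auto simp: Bd_def Sh_def not_le)
    next
      case True
      have rsl: "length rs = n" "set rs \<subseteq> cr_words m l" "\<not> small_cancellation lam (set rs)"
        using rs by (auto simp: Bd_def W_def)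
      from bad_contain[OF sh s1 lam sdef rsl True]
      obtain i j a b f g where ij: "i < n" "j < n" "a < l" "b < l"
        "(i = j \<and> Esame s h a b f g (rs ! i)) \<or> (i \<noteq> j \<and> Ediff s a b f g (rs ! i) (rs ! j))" by blast
      hence "rs \<in> Ev (i,j,a,b,f,g)" using rs by (auto simp: Ev_def Qf_def Bd_def)
      moreover have "(i,j,a,b,f,g) \<in> Idx" using ij by (simp add: Idx_def)
      ultimately show ?thesis by blast
    qed
  qed
  have cSh: "\<And>i. i \<in> {..<n} \<Longrightarrow> real (card (Sh i)) \<le> N^(n-1) * (4 * q^h)"
  proof -
    fix i assume i: "i \<in> {..<n}"
    show "real (card (Sh i)) \<le> N^(n-1) * (4 * q^h)"
      unfolding Sh_def N_def
    proof (rule tuple_count[where j = i])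
      show "i < n" using i by simp
      show "finite W" by (rule finW)
    next
      fix rest :: "letter list list" assume rl: "length rest = n - 1"
      have "{y\<in>W. length (ins i y rest ! i) < h} \<subseteq> RL m h"
        using i rl by (auto simp: ins_nth_same W_def cr_words_def RL_def Alph_def cyc_reduced_def)
      hence "card {y\<in>W. length (ins i y rest ! i) < h} \<le> card (RL m h)" by (rule card_mono[OF finite_RL])
      hence "real (card {y\<in>W. length (ins i y rest ! i) < h}) \<le> real (card (RL m h))" by simp
      also have "\<dots> \<le> 4 * q^h" unfolding q_def by (rule card_RL_le[OF m])
      finally show "real (card {y\<in>W. length (ins i y rest ! i) < h}) \<le> 4 * q^h" .
    qed
  qed
  have cEv: "\<And>\<iota>. \<iota> \<in> Idx \<Longrightarrow> real (card (Ev \<iota>)) \<le> N^(n-1) * B"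
  proof -
    fix \<iota> assume io: "\<iota> \<in> Idx"
    then obtain i j a b f g where iota: "\<iota> = (i,j,a,b,f,g)" and ij: "i < n" "j < n"
      by (auto simp: Idx_def)
    show "real (card (Ev \<iota>)) \<le> N^(n-1) * B"
      unfolding Ev_def N_def
    proof (rule tuple_count[where j = j])
      show "j < n" using ij by simp
      show "finite W" by (rule finW)
    next
      fix rest :: "letter list list" assume rl: "length rest = n - 1"
      have jl: "j \<le> length rest" using rl ij by simp
      show "real (card {y\<in>W. Qf \<iota> (ins j y rest)}) \<le> B"
      proof (cases "i = j")
        case True
        have "{y\<in>W. Qf \<iota> (ins j y rest)} = {x\<in>cr_words m l. Esame s h a b f g x}"
          using True jl by (auto simp: iota Qf_def W_def ins_nth_same)
        moreover have "real (card {x\<in>cr_words m l. Esame s h a b f g x}) \<le> B"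
          unfolding B_def q_def by (rule same_count[OF m s1 sh])
        ultimately show ?thesis by simp
      next
        case False
        define c where "c = ins j undefined rest ! i"
        have "{y\<in>W. Qf \<iota> (ins j y rest)} = {y\<in>cr_words m l. take s (rotate b (fl g y)) = take s (rotate a (fl f c))}"
        proof -
          have eqc: "\<And>y. ins j y rest ! i = c" using ins_nth_other[OF False jl] by (simp add: c_def)
          show ?thesis using False jl by (auto simp: iota Qf_def W_def Ediff_def eqc ins_nth_same)
        qed
        moreover have "real (card {y\<in>cr_words m l. take s (rotate b (fl g y)) = take s (rotate a (fl f c))})
            \<le> 4 * q^(l-s)" unfolding q_def by (rule diff_count[OF m])
        moreover have "4 * q^(l-s) \<le> B"
        proof -
          have "0 \<le> 4 * q^(l-s)" by (simp add: q_def)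
          hence "1 * (4 * q^(l-s)) \<le> real (l+1) * (4 * q^(l-s))" by (intro mult_right_mono) auto
          thus ?thesis by (simp add: B_def)
        qed
        ultimately show ?thesis by simp
      qed
    qed
  qed
  have "card Bd \<le> card ((\<Union>i\<in>{..<n}. Sh i) \<union> (\<Union>\<iota>\<in>Idx. Ev \<iota>))"
    by (rule card_mono[OF _ contain]) (use finL fIdx in \<open>auto simp: Sh_def Ev_def\<close>)
  also have "\<dots> \<le> card (\<Union>i\<in>{..<n}. Sh i) + card (\<Union>\<iota>\<in>Idx. Ev \<iota>)" by (rule card_Un_le)
  also have "\<dots> \<le> (\<Sum>i\<in>{..<n}. card (Sh i)) + (\<Sum>\<iota>\<in>Idx. card (Ev \<iota>))"
    by (intro add_mono card_UN_le) (use fIdx in auto)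
  finally have "real (card Bd) \<le> (\<Sum>i\<in>{..<n}. real (card (Sh i))) + (\<Sum>\<iota>\<in>Idx. real (card (Ev \<iota>)))"
    unfolding of_nat_sum[symmetric] of_nat_add[symmetric] by (rule of_nat_mono)
  also have "\<dots> \<le> (\<Sum>i\<in>{..<n}. N^(n-1) * (4 * q^h)) + (\<Sum>\<iota>\<in>Idx. N^(n-1) * B)"
    by (intro add_mono sum_mono cSh cEv)
  also have "\<dots> = real n * (N^(n-1) * (4 * q^h)) + real (card Idx) * (N^(n-1) * B)" by simp
  also have "card Idx = 4*n*n*l*l"
  proof -
    have c4: "card ((UNIV::bool set) \<times> (UNIV::bool set)) = 4"
      by (simp only: card_cartesian_product card_UNIV_bool)
    show ?thesis unfolding Idx_def card_cartesian_product c4 by simp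
  qed
  finally show ?thesis by (simp add: Bd_def W_def N_def q_def B_def algebra_simps)
qed

lemma prob_bounds:
  fixes lam :: real
  assumes m: "m \<ge> 2" and sh: "2*s \<le> h" and s1: "1 \<le> s" and lam: "0 \<le> lam"
    and sdef: "s = nat \<lceil>lam * real h\<rceil>" and l: "l \<ge> 2"
  shows "1 - (8 * real n * real (2*m-1)^h / real (2*m-1)^l
            + 32 * real n^2 * real l^2 * real (l+1) * real (2*m-1)^(l-s) / real (2*m-1)^l)
          \<le> rel_prob m n l (\<lambda>rs. small_cancellation lam (set rs))"
    and "rel_prob m n l (\<lambda>rs. small_cancellation lam (set rs)) \<le> 1"
proof -
  define W where "W = cr_words m l"
  define q where "q = real (2*m-1)"
  define N where "N = real (card W)"
  define X where "X = real n * (4 * q^h) + real (4*n*n*l*l) * (real (l+1) * (4 * q^(l-s)))"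
  define Tot where "Tot = {rs. length rs = n \<and> set rs \<subseteq> W}"
  define Gd where "Gd = {rs. length rs = n \<and> set rs \<subseteq> W \<and> small_cancellation lam (set rs)}"
  define Bd where "Bd = {rs. length rs = n \<and> set rs \<subseteq> W \<and> \<not> small_cancellation lam (set rs)}"
  have q: "q \<ge> 3" using m by (simp add: q_def)
  have finW: "finite W" by (simp add: W_def finite_cr_words)
  have Nl: "q^l / 2 \<le> N" using N_lower[OF m l] by (simp add: N_def W_def q_def)
  have qlpos: "q^l > 0" using q by simp
  have Npos: "N > 0" using Nl qlpos by linarith
  have cTot: "card Tot = card W ^ n"
  proof -
    have "Tot = {rs. set rs \<subseteq> W \<and> length rs = n}" by (auto simp: Tot_def)
    thus ?thesis using card_lists_length_eq[OF finW] by simp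
  qed
  have finTot: "finite Tot"
  proof -
    have "Tot = {rs. set rs \<subseteq> W \<and> length rs = n}" by (auto simp: Tot_def)
    thus ?thesis using finite_lists_length_eq[OF finW] by simp
  qed
  have "Tot = Gd \<union> Bd" "Gd \<inter> Bd = {}" by (auto simp: Tot_def Gd_def Bd_def)
  hence cTGB: "card Tot = card Gd + card Bd"
    using finTot by (metis card_Un_disjoint finite_Un)
  have rp: "rel_prob m n l (\<lambda>rs. small_cancellation lam (set rs)) = real (card Gd) / N^n"
    unfolding rel_prob_def Gd_def N_def W_def using cTot by (simp add: Tot_def W_def)
  have NnPos: "N^n > 0" using Npos by simp
  have "real (card Gd) \<le> N^n" using cTGB cTot by (simp add: N_def)
  thus "rel_prob m n l (\<lambda>rs. small_cancellation lam (set rs)) \<le> 1" using rp NnPos by simp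
  have bd: "real (card Bd) \<le> N^(n-1) * X"
    using bad_card[OF m sh s1 lam sdef, of n l] by (simp add: Bd_def W_def N_def X_def q_def)
  have Xnn: "X \<ge> 0" by (simp add: X_def q_def)
  have key: "real (card Bd) / N^n \<le> X / N"
  proof (cases n)
    case 0
    hence "X = 0" by (simp add: X_def)
    thus ?thesis using bd 0 by simp
  next
    case (Suc n')
    have "N^n = N * N^(n-1)" using Suc by simp
    hence "real (card Bd) / N^n = real (card Bd) / N^(n-1) / N" by simp
    also have "real (card Bd) / N^(n-1) \<le> X" using bd Npos by (simp add: divide_le_eq mult.commute)
    hence "real (card Bd) / N^(n-1) / N \<le> X / N" using Npos divide_right_mono[of "real (card Bd) / N^(n-1)" X N] by simp
    finally show ?thesis .
  qed
  also have "X / N \<le> X / (q^l / 2)" using Xnn Nl qlpos by (intro divide_left_mono) auto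
  also have "X / (q^l / 2) = 8 * real n * q^h / q^l + 32 * real n^2 * real l^2 * real (l+1) * q^(l-s) / q^l"
  proof -
    have "X / (q^l / 2) = (2 * X) / q^l" by simp
    also have "2 * X = 8 * real n * q^h + 32 * real n^2 * real l^2 * real (l+1) * q^(l-s)"
      by (simp add: X_def algebra_simps power2_eq_square)
    finally show ?thesis by (simp add: add_divide_distrib)
  qed
  finally have kb: "real (card Bd) / N^n \<le> 8 * real n * q^h / q^l + 32 * real n^2 * real l^2 * real (l+1) * q^(l-s) / q^l" .
  have "real (card Gd) + real (card Bd) = N^n" using cTGB cTot unfolding N_def
    by (metis of_nat_add of_nat_power)
  hence "real (card Gd) / N^n = 1 - real (card Bd) / N^n"
  proof -
    have "real (card Gd) = N^n - real (card Bd)" using \<open>real (card Gd) + real (card Bd) = N^n\<close> by linarith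
    thus ?thesis using NnPos Npos by (simp add: diff_divide_distrib)
  qed
  thus "1 - (8 * real n * real (2*m-1)^h / real (2*m-1)^l
            + 32 * real n^2 * real l^2 * real (l+1) * real (2*m-1)^(l-s) / real (2*m-1)^l)
          \<le> rel_prob m n l (\<lambda>rs. small_cancellation lam (set rs))"
    using rp kb by (simp add: q_def)
qed

lemma n_bound:
  assumes "C > 0" "K \<ge> 0" "l \<ge> 1"
  shows "real (num_relators C K l) \<le> (C + 1) * real l powr K"
proof -
  have p1: "real l powr K \<ge> 1" using assms by (intro ge_one_powr_ge_zero) auto
  have x0: "C * real l powr K \<ge> 0" using assms by simp
  have "round (C * real l powr K) \<ge> 0" using x0 by (simp add: round_def)
  hence "real (num_relators C K l) = of_int (round (C * real l powr K))"
    by (simp add: num_relators_def)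
  also have "\<dots> \<le> C * real l powr K + 1/2" by (rule of_int_round_le)
  also have "\<dots> \<le> C * real l powr K + real l powr K" using p1 by simp
  finally show ?thesis by (simp add: algebra_simps)
qed

lemma qs_bound:
  fixes K :: real and q :: real
  assumes q: "q \<ge> 3" and K: "K \<ge> 0" and l: "l \<ge> 2"
    and lam: "lam = 6 * (K + 2) * ln (real l) / (real l * ln q)"
    and h: "h = l div 2" and s: "s = nat \<lceil>lam * real h\<rceil>"
  shows "1 / q^s \<le> exp (3*(K+2)) * real l powr (- (3*(K+2)))"
proof -
  define c where "c = 3*(K+2)"
  have lq: "ln q > 0" using q by simp
  have lnl: "ln (real l) \<ge> 0" using l by simp
  have lnl2: "ln (real l) \<le> real l" using l by (intro ln_bound) auto
  have lpos: "real l > 0" using l by simp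
  have h2: "2 * real h \<ge> real l - 1" using h by linarith
  have "real s \<ge> lam * real h" using s by linarith
  hence "q powr (lam * real h) \<le> q powr (real s)" using q by (intro powr_mono) auto
  also have "q powr (real s) = q^s" using q by (simp add: powr_realpow)
  finally have A: "q powr (lam * real h) \<le> q^s" .
  have e: "lam * real h * ln q = c * ln (real l) * (2 * real h / real l)"
    using lq lpos by (simp add: lam c_def field_simps)
  have "2 * real h / real l \<ge> (real l - 1) / real l" using h2 lpos by (simp add: divide_right_mono)
  hence B1: "c * ln (real l) * (2 * real h / real l) \<ge> c * ln (real l) * ((real l - 1) / real l)"
    using lnl K by (intro mult_left_mono) (auto simp: c_def)
  have B2: "c * ln (real l) * ((real l - 1) / real l) = c * ln (real l) - c * (ln (real l) / real l)"
    using lpos by (simp add: field_simps)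
  have B3: "c * (ln (real l) / real l) \<le> c * 1" using lnl2 lpos K
    by (intro mult_left_mono) (auto simp: c_def)
  have B: "lam * real h * ln q \<ge> c * ln (real l) - c" using e B1 B2 B3 by linarith
  have "exp (c * ln (real l) - c) \<le> exp (lam * real h * ln q)" using B by simp
  also have "exp (lam * real h * ln q) = q powr (lam * real h)" using q by (simp add: powr_def)
  finally have "exp (c * ln (real l) - c) \<le> q^s" using A by linarith
  moreover have "exp (c * ln (real l) - c) = real l powr c / exp c"
    using lpos by (simp add: powr_def exp_diff mult.commute)
  ultimately have C: "real l powr c / exp c \<le> q^s" by simp
  have pos: "real l powr c / exp c > 0" using lpos by simp
  have qsp: "q^s > 0" using q by simp
  have "1 / q^s \<le> 1 / (real l powr c / exp c)"
  proof -
    have "0 < q ^ s * real l powr c / exp c" using qsp lpos by simp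
    thus ?thesis using divide_left_mono[of "real l powr c / exp c" "q^s" 1] C pos qsp by simp
  qed
  also have "\<dots> = exp c * real l powr (- c)" by (simp add: powr_minus divide_inverse)
  finally show ?thesis by (simp add: c_def)
qed

lemma E_bound:
  fixes K C :: real and q :: real
  assumes q: "q \<ge> 3" and K: "K \<ge> 0" and C: "C > 0" and l: "l \<ge> 2"
    and lam: "lam = 6 * (K + 2) * ln (real l) / (real l * ln q)"
    and h: "h = l div 2" and s: "s = nat \<lceil>lam * real h\<rceil>" and sh: "2*s \<le> h"
    and n: "n = num_relators C K l"
  shows "8 * real n * q^h / q^l + 32 * real n^2 * real l^2 * real (l+1) * q^(l-s) / q^l
         \<le> (8*(C+1) + 64*(C+1)^2) * exp (3*(K+2)) / real l"
proof -
  define c where "c = 3*(K+2)"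
  define P where "P = exp c * real l powr (- c)"
  define D where "D = (C + 1) * real l powr K"
  have lpos: "real l > 0" using l by simp
  have qs: "1 / q^s \<le> P" using qs_bound[OF q K l lam h s] by (simp add: P_def c_def)
  have Pnn: "P \<ge> 0" by (simp add: P_def)
  have nD: "real n \<le> D" using n_bound[OF C K, of l] l n by (simp add: D_def)
  have n0: "real n \<ge> 0" by simp
  have qpos: "q > 0" using q by simp
  have t1: "q^h / q^l \<le> 1 / q^s"
  proof -
    have "q^l = q^h * q^(l-h)" using h by (simp add: power_add[symmetric])
    hence "q^h / q^l = 1 / q^(l-h)" using qpos by simp
    also have "q^s \<le> q^(l-h)" using q h sh by (intro power_increasing) auto
    hence "1 / q^(l-h) \<le> 1 / q^s" using qpos by (simp add: frac_le)
    finally show ?thesis .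
  qed
  have t2: "q^(l-s) / q^l = 1 / q^s"
  proof -
    have "q^l = q^(l-s) * q^s" using h sh by (simp add: power_add[symmetric])
    thus ?thesis using qpos by simp
  qed
  have T1: "8 * real n * q^h / q^l \<le> 8 * D * P"
  proof -
    have "8 * real n * q^h / q^l = 8 * real n * (q^h / q^l)" by simp
    also have "\<dots> \<le> 8 * D * P" using t1 qs nD n0 Pnn qpos
      by (intro mult_mono) (auto simp: D_def intro: order_trans)
    finally show ?thesis .
  qed
  have T2: "32 * real n^2 * real l^2 * real (l+1) * q^(l-s) / q^l \<le> 32 * D^2 * real l^2 * (2 * real l) * P"
  proof -
    have "32 * real n^2 * real l^2 * real (l+1) * q^(l-s) / q^l = 32 * real n^2 * real l^2 * real (l+1) * (1 / q^s)"
      using t2 by (metis (no_types, lifting) times_divide_eq_right)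
    also have "\<dots> \<le> 32 * D^2 * real l^2 * (2 * real l) * P"
      using qs nD n0 Pnn l qpos by (intro mult_mono power_mono) auto
    finally show ?thesis .
  qed
  have pw1: "D * P = (C+1) * exp c * real l powr (K - c)"
    using lpos by (simp add: D_def P_def powr_add[symmetric])
  have pw2: "D^2 * real l^2 * (2 * real l) * P = 2 * (C+1)^2 * exp c * real l powr (2*K + 3 - c)"
  proof -
    have "real l powr K * real l powr K = real l powr (2*K)" by (simp add: powr_add[symmetric])
    moreover have "real l^2 * real l = real l powr 3"
      using lpos by (simp add: powr_realpow power2_eq_square power3_eq_cube)
    moreover have "real l powr (2*K) * real l powr 3 * real l powr (-c) = real l powr (2*K + 3 - c)"
      by (simp only: powr_add[symmetric] diff_conv_add_uminus)
    ultimately have inner: "(real l powr K * real l powr K) * (real l^2 * real l) * real l powr (-c) = real l powr (2*K + 3 - c)"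
      by simp
    have "D^2 * real l^2 * (2 * real l) * P = 2 * (C+1)^2 * exp c * ((real l powr K * real l powr K) * (real l^2 * real l) * real l powr (-c))"
      by (simp add: D_def P_def power2_eq_square)
    thus ?thesis using inner by simp
  qed
  have m1: "real l powr (K - c) \<le> real l powr (-1)" using l K by (intro powr_mono) (auto simp: c_def)
  have m2: "real l powr (2*K + 3 - c) \<le> real l powr (-1)" using l K by (intro powr_mono) (auto simp: c_def)
  have inv: "real l powr (-1) = 1 / real l" using lpos by (simp add: powr_minus divide_inverse)
  have ec: "exp c > 0" by simp
  have F1: "8 * D * P \<le> 8 * (C+1) * exp c * (1 / real l)"
  proof -
    have "(8*(C+1)*exp c) * real l powr (K - c) \<le> (8*(C+1)*exp c) * (1 / real l)"
      using m1 inv C ec by (intro mult_left_mono) auto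
    thus ?thesis using pw1 by (simp add: algebra_simps)
  qed
  have F2: "32 * D^2 * real l^2 * (2 * real l) * P \<le> 64 * (C+1)^2 * exp c * (1 / real l)"
  proof -
    have "32 * D^2 * real l^2 * (2 * real l) * P = 32 * (D^2 * real l^2 * (2 * real l) * P)" by simp
    also have "\<dots> = 64 * (C+1)^2 * exp c * real l powr (2*K + 3 - c)" using pw2 by simp
    also have "\<dots> \<le> 64 * (C+1)^2 * exp c * (1 / real l)" using m2 inv C ec by (intro mult_left_mono) auto
    finally show ?thesis .
  qed
  have R: "(8*(C+1) + 64*(C+1)^2) * exp (3*(K+2)) / real l = 8 * (C+1) * exp c * (1 / real l) + 64 * (C+1)^2 * exp c * (1 / real l)"
    by (simp add: c_def add_divide_distrib distrib_right)
  show ?thesis unfolding R using T1 T2 F1 F2 by linarith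
qed

lemma conds:
  fixes K :: real and q :: real
  assumes q: "q \<ge> 3" and K: "K \<ge> 0" and l: "l \<ge> 2"
    and lA: "real l \<ge> (24*(K+2)+5)^2"
    and lam: "lam = 6 * (K + 2) * ln (real l) / (real l * ln q)"
    and h: "h = l div 2" and s: "s = nat \<lceil>lam * real h\<rceil>"
  shows "0 \<le> lam" "1 \<le> s" "2*s \<le> h"
proof -
  have lpos: "real l > 0" using l by simp
  have lnq: "ln q \<ge> 1"
  proof -
    have "exp 1 \<le> q" using exp_le q by linarith
    hence "ln (exp 1) \<le> ln q" using q by (subst ln_le_cancel_iff) auto
    thus ?thesis by simp
  qed
  have lnl: "ln (real l) > 0" using l by simp
  show lam0: "0 \<le> lam" using lnl lnq lpos K by (simp add: lam)
  have h1: "h \<ge> 1" using h l by simp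
  have lampos: "lam > 0" using lnl lnq lpos K by (simp add: lam)
  hence "lam * real h > 0" using h1 by simp
  thus "1 \<le> s" using s by linarith
  have hl: "real h \<le> real l / 2" using h by linarith
  have "lam * real h \<le> lam * (real l / 2)" using hl lampos by (intro mult_left_mono) auto
  also have "\<dots> = 3 * (K+2) * ln (real l) / ln q" using lpos lnq by (simp add: lam field_simps)
  also have "\<dots> \<le> 3 * (K+2) * ln (real l)"
  proof -
    have "0 \<le> 3 * (K+2) * ln (real l)" using K lnl by simp
    thus ?thesis using lnq by (simp add: divide_le_eq mult_le_cancel_left1 mult_left_mono[of 1 "ln q"] order_trans)
  qed
  also have "ln (real l) \<le> real l powr (1/2) / (1/2)" using l by (intro ln_powr_bound) auto
  hence "3 * (K+2) * ln (real l) \<le> 3 * (K+2) * (2 * sqrt (real l))"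
    using K by (intro mult_left_mono) (auto simp: powr_half_sqrt)
  finally have sl: "lam * real h \<le> 6 * (K+2) * sqrt (real l)" by (simp add: algebra_simps)
  have sle: "real s \<le> lam * real h + 1"
  proof -
    have "lam * real h \<ge> 0" using lam0 by simp
    hence c0: "\<lceil>lam * real h\<rceil> \<ge> 0" by linarith
    have "real s = of_int \<lceil>lam * real h\<rceil>" using s c0 by simp
    also have "\<dots> \<le> lam * real h + 1" by (rule of_int_ceiling_le_add_one)
    finally show ?thesis .
  qed
  define A where "A = 24*(K+2)+5"
  have A1: "A \<ge> 1" using K by (simp add: A_def)
  have "sqrt (real l) \<ge> sqrt (A^2)" using lA unfolding A_def by (rule real_sqrt_le_mono)
  hence sA: "sqrt (real l) \<ge> A" using A1 by simp
  have "real l = sqrt (real l) * sqrt (real l)" by simp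
  also have "\<dots> \<ge> A * sqrt (real l)" using sA by (intro mult_right_mono) auto
  finally have "real l \<ge> 24*(K+2) * sqrt (real l) + 5 * sqrt (real l)" by (simp add: A_def algebra_simps)
  moreover have "5 * sqrt (real l) \<ge> 5" using sA A1 by linarith
  ultimately have "real l \<ge> 24*(K+2) * sqrt (real l) + 5" by linarith
  hence "2 * real s \<le> real h" using sl sle h by linarith
  thus "2*s \<le> h" by linarith
qed

theorem proposition6p2:
  fixes m :: nat and C K :: real
  assumes "m \<ge> 2" and "C > 0" and "K \<ge> 0"
  shows "(\<lambda>l. rel_prob m (num_relators C K l) l
            (\<lambda>rs. small_cancellation
                    (6 * (K + 2) * ln (real l) / (real l * ln (2 * real m - 1)))
                    (set rs)))
         \<longlonglongrightarrow> 1"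
proof -
  note m = assms(1) and C = assms(2) and K = assms(3)
  define q where "q = real (2*m-1)"
  have qq: "2 * real m - 1 = q" using m by (simp add: q_def of_nat_diff)
  have q3: "q \<ge> 3" using m by (simp add: q_def)
  define M0 where "M0 = (8*(C+1) + 64*(C+1)^2) * exp (3*(K+2))"
  define L0 where "L0 = nat \<lceil>(24*(K+2)+5)^2\<rceil> + 2"
  define P where "P = (\<lambda>l. rel_prob m (num_relators C K l) l
            (\<lambda>rs. small_cancellation
                    (6 * (K + 2) * ln (real l) / (real l * ln (2 * real m - 1)))
                    (set rs)))"
  have ev: "\<And>l. l \<ge> L0 \<Longrightarrow> 1 - M0 / real l \<le> P l \<and> P l \<le> 1"
  proof -
    fix l :: nat assume lL: "l \<ge> L0"
    have l2: "l \<ge> 2" using lL by (simp add: L0_def)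
    have lA: "real l \<ge> (24*(K+2)+5)^2"
    proof -
      have "(24*(K+2)+5)^2 \<le> real (nat \<lceil>(24*(K+2)+5)^2\<rceil>)" by linarith
      also have "\<dots> \<le> real l" using lL by (simp add: L0_def)
      finally show ?thesis .
    qed
    define lam where "lam = 6 * (K + 2) * ln (real l) / (real l * ln q)"
    define h where "h = l div 2"
    define s where "s = nat \<lceil>lam * real h\<rceil>"
    define n where "n = num_relators C K l"
    have cd: "0 \<le> lam" "1 \<le> s" "2*s \<le> h"
      using conds[OF q3 K l2 lA lam_def h_def s_def] by auto
    have Pl: "P l = rel_prob m n l (\<lambda>rs. small_cancellation lam (set rs))"
      by (simp add: P_def qq lam_def n_def)
    have pb: "1 - (8 * real n * real (2*m-1)^h / real (2*m-1)^l
            + 32 * real n^2 * real l^2 * real (l+1) * real (2*m-1)^(l-s) / real (2*m-1)^l)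
          \<le> rel_prob m n l (\<lambda>rs. small_cancellation lam (set rs))"
         "rel_prob m n l (\<lambda>rs. small_cancellation lam (set rs)) \<le> 1"
      using prob_bounds[OF m cd(3) cd(2) cd(1) s_def l2, of n] by auto
    have eb: "8 * real n * q^h / q^l + 32 * real n^2 * real l^2 * real (l+1) * q^(l-s) / q^l
         \<le> M0 / real l"
      using E_bound[OF q3 K C l2 lam_def h_def s_def cd(3) n_def] by (simp add: M0_def)
    show "1 - M0 / real l \<le> P l \<and> P l \<le> 1" using pb eb Pl by (simp add: q_def)
  qed
  have lim1: "(\<lambda>l. 1 - M0 / real l) \<longlonglongrightarrow> 1"
  proof -
    have "(\<lambda>l. M0 * inverse (real l)) \<longlonglongrightarrow> M0 * 0"
      by (intro tendsto_mult tendsto_const lim_inverse_n)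
    hence "(\<lambda>l. M0 / real l) \<longlonglongrightarrow> 0" by (simp add: divide_inverse)
    hence "(\<lambda>l. 1 - M0 / real l) \<longlonglongrightarrow> 1 - 0" by (intro tendsto_diff tendsto_const)
    thus ?thesis by simp
  qed
  have "P \<longlonglongrightarrow> 1"
  proof (rule tendsto_sandwich[OF _ _ lim1 tendsto_const])
    show "eventually (\<lambda>l. 1 - M0 / real l \<le> P l) sequentially"
      using ev by (auto simp: eventually_sequentially)
    show "eventually (\<lambda>l. P l \<le> 1) sequentially"
      using ev by (auto simp: eventually_sequentially)
  qed
  thus ?thesis by (simp add: P_def)
qed

end
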